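(* Let $\kappa$ be a cardinal and let $F_\kappa$ be the free group on $\kappa$ generators. Then for every uncountable ordinal $\lambda$ there is a partition $F_\kappa=A_0\cup A_1$ into two cells such that there is no injective sequence $\vec{x}=\langle x_\xi : \xi<\lambda\rangle$ of elements of $F_\kappa$ and no $i\in 2$ with $\mathrm{FP}(\vec{x})\subseteq A_i$; that is, $\mathrm{Hind}(F_\kappa,\lambda)$ fails.
   Context: For a semigroup $(S,* )$, an ordinal $\alpha$ and a sequence $\vec{x}=\langle x_\xi : \xi<\alpha\rangle$ in $S$, $\mathrm{FP}(\vec{x})$ is the set of all finite products $x_{\xi_0}*x_{\xi_1}*\cdots*x_{\xi_l}$ with $l<\omega$ and $\xi_0<\xi_1<\cdots<\xi_l<\alpha$. $\mathrm{Hind}(S,\alpha)$ is the statement: for every partition $S=A_0\cup A_1$ into two cells there exist an (injective) sequence $\vec{x}=\langle x_\xi:\xi<\alpha\rangle$ in $S$ and an $i\in 2$ with $\mathrm{FP}(\vec{x})\subseteq A_i$. *)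

theory Defs
  imports "HOL-Algebra.Group" "HOL-Library.Countable_Set"
begin

text \<open>A letter (a, True) stands for the generator a, (a, False) for its inverse.\<close>

fun reduced :: "('a \<times> bool) list \<Rightarrow> bool" where
  "reduced [] = True"
| "reduced [x] = True"
| "reduced (x # y # ys) = (\<not> (fst x = fst y \<and> snd x \<noteq> snd y) \<and> reduced (y # ys))"

fun cons_red :: "'a \<times> bool \<Rightarrow> ('a \<times> bool) list \<Rightarrow> ('a \<times> bool) list" where
  "cons_red x [] = [x]"
| "cons_red x (y # ys) = (if fst x = fst y \<and> snd x \<noteq> snd y then ys else x # y # ys)"

definition free_group :: "'a set \<Rightarrow> ('a \<times> bool) list monoid" where
  "free_group K = \<lparr> carrier = {w. reduced w \<and> fst ` set w \<subseteq> K},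
                    mult = (\<lambda>u v. foldr cons_red u v),
                    one = [] \<rparr>"

text \<open>An ordinal \<lambda> is represented by a well-order r; the index set {\<xi>. \<xi> < \<lambda>} is Field r.
  FP collects the products x \<xi>0 * ... * x \<xi>l over nonempty strictly r-increasing
  finite lists of indices.\<close>

definition FP :: "('g, 'm) monoid_scheme \<Rightarrow> 'b rel \<Rightarrow> ('b \<Rightarrow> 'g) \<Rightarrow> 'g set" where
  "FP S r x = {foldr (\<lambda>a b. a \<otimes>\<^bsub>S\<^esub> b) (map x (butlast xs)) (x (last xs)) | xs.
      xs \<noteq> [] \<and> set xs \<subseteq> Field r \<and> sorted_wrt (\<lambda>a b. (a, b) \<in> r \<and> a \<noteq> b) xs}"

definition Hind :: "('g, 'm) monoid_scheme \<Rightarrow> 'b rel \<Rightarrow> bool" where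
  "Hind S r \<longleftrightarrow> (\<forall>A0 A1. A0 \<union> A1 = carrier S \<and> A0 \<inter> A1 = {} \<longrightarrow>
      (\<exists>x. x \<in> Field r \<rightarrow> carrier S \<and> inj_on x (Field r) \<and>
           (FP S r x \<subseteq> A0 \<or> FP S r x \<subseteq> A1)))"

end

theory Submission
  imports Defs "HOL-Library.Discrete_Functions"
begin


definition linv :: "'a \<times> bool \<Rightarrow> 'a \<times> bool" where "linv p = (fst p, \<not> snd p)"
definition winv :: "('a \<times> bool) list \<Rightarrow> ('a \<times> bool) list" where "winv w = rev (map linv w)"

lemma linv_linv[simp]: "linv (linv p) = p" by (simp add: linv_def)
lemma winv_winv[simp]: "winv (winv w) = w" by (simp add: winv_def rev_map comp_def)
lemma winv_Cons[simp]: "winv (a # w) = winv w @ [linv a]" by (simp add: winv_def)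
lemma winv_append[simp]: "winv (u @ v) = winv v @ winv u" by (simp add: winv_def)
lemma winv_Nil[simp]: "winv [] = []" by (simp add: winv_def)
lemma length_winv[simp]: "length (winv w) = length w" by (simp add: winv_def)

lemma invp_iff: "(fst x = fst y \<and> snd x \<noteq> snd y) \<longleftrightarrow> y = linv x"
  by (cases x; cases y) (auto simp: linv_def)

lemma reduced_Cons: "reduced (a # w) \<longleftrightarrow> reduced w \<and> (w \<noteq> [] \<longrightarrow> hd w \<noteq> linv a)"
  by (cases w) (auto simp: linv_def prod_eq_iff)

lemma reduced_append:
  "reduced (u @ v) \<longleftrightarrow> reduced u \<and> reduced v \<and> (u \<noteq> [] \<longrightarrow> v \<noteq> [] \<longrightarrow> hd v \<noteq> linv (last u))"
  by (induction u) (auto simp: reduced_Cons)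

lemma foldr_red: "reduced (u @ v) \<Longrightarrow> foldr cons_red u v = u @ v"
proof (induction u)
  case (Cons a u)
  then have r: "reduced (u @ v)" and h: "u @ v \<noteq> [] \<longrightarrow> hd (u @ v) \<noteq> linv a"
    by (simp_all add: reduced_Cons)
  show ?case
  proof (cases "u @ v")
    case Nil then show ?thesis using Cons r by simp
  next
    case (Cons y ys) then show ?thesis using Cons.IH r h by (auto simp: linv_def prod_eq_iff)
  qed
qed simp

lemma foldr_cancel: "foldr cons_red q (winv q @ v) = v"
proof (induction q arbitrary: v)
  case (Cons a q)
  have "foldr cons_red (a # q) (winv (a # q) @ v) = cons_red a (foldr cons_red q (winv q @ (linv a # v)))"
    by simp
  also have "\<dots> = cons_red a (linv a # v)" using Cons.IH by simp
  also have "\<dots> = v" by (simp add: linv_def)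
  finally show ?case .
qed simp

lemma chain_value:
  assumes Y: "\<And>\<xi>. \<xi> \<in> Y \<Longrightarrow> x \<xi> = P1 @ M \<xi> @ winv P1 \<and> reduced (x \<xi>) \<and> M \<xi> \<noteq> []"
  shows "set zs \<subseteq> Y \<Longrightarrow> zs \<noteq> [] \<Longrightarrow> successively (\<lambda>a b. hd (M b) \<noteq> linv (last (M a))) zs \<Longrightarrow>
    foldr (\<lambda>a b. foldr cons_red a b) (map x (butlast zs)) (x (last zs)) = P1 @ concat (map M zs) @ winv P1
    \<and> reduced (P1 @ concat (map M zs) @ winv P1)"
proof (induction zs)
  case Nil then show ?case by simp
next
  case (Cons z ys)
  show ?case
  proof (cases "ys = []")
    case True then show ?thesis using Cons.prems Y[of z] by (metis (no_types) append_Nil butlast.simps(2) concat.simps(1,2) last_ConsL list.simps(8,9) list.set_intros(1) subsetD foldr.simps(1) id_apply append.right_neutral)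
  next
    case False
    have IH: "foldr (\<lambda>a b. foldr cons_red a b) (map x (butlast ys)) (x (last ys)) = P1 @ concat (map M ys) @ winv P1"
      "reduced (P1 @ concat (map M ys) @ winv P1)"
      using Cons.IH Cons.prems False by (auto simp: successively_Cons)
    have z: "x z = P1 @ M z @ winv P1" "reduced (x z)" "M z \<noteq> []" using Y[of z] Cons.prems by auto
    have j: "hd (M (hd ys)) \<noteq> linv (last (M z))" using Cons.prems False by (auto simp: successively_Cons)
    have hy: "M (hd ys) \<noteq> []" using Y[of "hd ys"] Cons.prems False hd_in_set by auto
    have hc: "hd (concat (map M ys)) = hd (M (hd ys))" using False hy by (cases ys) auto
    have r1: "reduced (P1 @ M z)" using z by (metis append_assoc reduced_append)
    have r2: "reduced (concat (map M ys) @ winv P1)" using IH(2) reduced_append by blast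
    have cne: "concat (map M ys) \<noteq> []" using False hy by (cases ys) auto
    have red: "reduced ((P1 @ M z) @ (concat (map M ys) @ winv P1))"
    proof -
      have "last (P1 @ M z) = last (M z)" using z(3) by simp
      moreover have "hd (concat (map M ys) @ winv P1) = hd (M (hd ys))" using cne hc by simp
      ultimately show ?thesis using reduced_append[of "P1 @ M z" "concat (map M ys) @ winv P1"] r1 r2 j z(3) by simp
    qed
    have "foldr (\<lambda>a b. foldr cons_red a b) (map x (butlast (z # ys))) (x (last (z # ys)))
        = foldr cons_red (x z) (P1 @ concat (map M ys) @ winv P1)"
      using False IH(1) by simp
    also have "\<dots> = foldr cons_red (P1 @ M z) (foldr cons_red (winv P1) (winv (winv P1) @ (concat (map M ys) @ winv P1)))"
      using z(1) by simp
    also have "\<dots> = foldr cons_red (P1 @ M z) (concat (map M ys) @ winv P1)" by (simp only: foldr_cancel)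
    also have "\<dots> = (P1 @ M z) @ (concat (map M ys) @ winv P1)" using red by (rule foldr_red)
    finally show ?thesis using red by simp
  qed
qed

lemma ap_hit:
  assumes "(d::nat) \<ge> 1"
  shows "a < T \<Longrightarrow> \<exists>k\<ge>1. T \<le> a + k * d \<and> a + k * d < T + d"
proof (induction T)
  case 0 then show ?case by simp
next
  case (Suc T)
  show ?case
  proof (cases "a < T")
    case False
    then have "T = a" using Suc.prems by simp
    then show ?thesis using assms by (intro exI[of _ 1]) auto
  next
    case True
    then obtain k where k: "k \<ge> 1" "T \<le> a + k * d" "a + k * d < T + d" using Suc.IH by auto
    show ?thesis
    proof (cases "a + k * d \<ge> Suc T")
      case True then show ?thesis using k by (intro exI[of _ k]) auto
    next
      case False then show ?thesis using k assms by (intro exI[of _ "Suc k"]) auto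
    qed
  qed
qed

lemma ap_colors:
  assumes "(d::nat) \<ge> 1"
  shows "\<exists>k\<ge>1. even (floor_log (a + k * d))" "\<exists>k\<ge>1. odd (floor_log (a + k * d))"
proof -
  have hit: "\<exists>k\<ge>1. floor_log (a + k * d) = j" if h: "a < 2^j" "d \<le> 2^j" for j
  proof -
    obtain k where k: "k \<ge> 1" "2^j \<le> a + k * d" "a + k * d < 2^j + d" using ap_hit[OF assms h(1)] by auto
    have "floor_log (a + k * d) = j"
      by (rule floor_log_eqI) (use k h in auto)
    then show ?thesis using k by auto
  qed
  define j where "j = a + d"
  have "a < 2^j" "d \<le> 2^j" "a < 2^Suc j" "d \<le> 2^Suc j" unfolding j_def
    using less_exp[of "a+d"] less_exp[of "Suc (a+d)"] by linarith+
  then obtain k1 k2 where "k1 \<ge> 1" "floor_log (a + k1 * d) = j" "k2 \<ge> 1" "floor_log (a + k2 * d) = Suc j"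
    using hit by meson
  then show "\<exists>k\<ge>1. even (floor_log (a + k * d))" "\<exists>k\<ge>1. odd (floor_log (a + k * d))"
    by (cases "even j"; auto)+
qed


lemma wo_D:
  assumes wo: "Well_order r" and unc: "\<not> countable (Field r)"
  shows "\<exists>D \<subseteq> Field r. \<not> countable D \<and> (\<forall>\<xi>\<in>D. countable {\<eta>. (\<eta>, \<xi>) \<in> r})"
proof (cases "\<forall>\<xi>\<in>Field r. countable {\<eta>. (\<eta>, \<xi>) \<in> r}")
  case True then show ?thesis using unc by blast
next
  case False
  define B where "B = {\<xi>\<in>Field r. \<not> countable {\<eta>. (\<eta>, \<xi>) \<in> r}}"
  have wf: "wf (r - Id)" using wo by (simp add: well_order_on_def)
  have "B \<noteq> {}" using False B_def by blast
  then obtain b where "b \<in> B" by blast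
  then obtain z where z: "z \<in> B" "\<And>y. (y, z) \<in> r - Id \<Longrightarrow> y \<notin> B"
    using wfE_min[OF wf, of b B] by blast
  define D where "D = {\<eta>. (\<eta>, z) \<in> r} - {z}"
  have "D \<subseteq> Field r" unfolding D_def by (auto simp: Field_def)
  moreover have "\<not> countable D" using z(1) unfolding D_def B_def by simp
  moreover have "\<forall>\<xi>\<in>D. countable {\<eta>. (\<eta>, \<xi>) \<in> r}"
  proof
    fix \<xi> assume "\<xi> \<in> D"
    then have "(\<xi>, z) \<in> r - Id" "\<xi> \<in> Field r" unfolding D_def by (auto simp: Field_def)
    then show "countable {\<eta>. (\<eta>, \<xi>) \<in> r}" using z(2) unfolding B_def by blast
  qed
  ultimately show ?thesis by blast
qed

lemma wo_pick:
  assumes wo: "Well_order r" and D: "D \<subseteq> Field r" "\<forall>\<xi>\<in>D. countable {\<eta>. (\<eta>, \<xi>) \<in> r}"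
    and Y: "Y \<subseteq> D" "\<not> countable Y" and xi: "\<xi> \<in> D" and E: "countable E"
  shows "\<exists>\<eta>\<in>Y. \<eta> \<notin> E \<and> (\<xi>, \<eta>) \<in> r \<and> \<eta> \<noteq> \<xi>"
proof -
  have "\<not> countable (Y - E - {\<eta>. (\<eta>, \<xi>) \<in> r})"
  proof
    assume c1: "countable (Y - E - {\<eta>. (\<eta>, \<xi>) \<in> r})"
    have c2: "countable {\<eta>. (\<eta>, \<xi>) \<in> r}" using D(2) xi by blast
    have c3: "countable ((Y - E - {\<eta>. (\<eta>, \<xi>) \<in> r}) \<union> E \<union> {\<eta>. (\<eta>, \<xi>) \<in> r})"
      by (rule countable_Un[OF countable_Un[OF c1 E] c2])
    have "Y \<subseteq> (Y - E - {\<eta>. (\<eta>, \<xi>) \<in> r}) \<union> E \<union> {\<eta>. (\<eta>, \<xi>) \<in> r}" by blast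
    from countable_subset[OF this c3] Y(2) show False by contradiction
  qed
  then have "Y - E - {\<eta>. (\<eta>, \<xi>) \<in> r} \<noteq> {}"
  proof (rule contrapos_nn)
    assume "Y - E - {\<eta>. (\<eta>, \<xi>) \<in> r} = {}"
    then show "countable (Y - E - {\<eta>. (\<eta>, \<xi>) \<in> r})" by (simp only: countable_empty)
  qed
  then obtain \<eta> where e: "\<eta> \<in> Y" "\<eta> \<notin> E" "(\<eta>, \<xi>) \<notin> r"
    by blast
  have lin: "linear_order_on (Field r) r" using wo by (simp add: well_order_on_def)
  have F: "\<eta> \<in> Field r" "\<xi> \<in> Field r" using e Y D xi by auto
  have "refl_on (Field r) r" using lin unfolding linear_order_on_def partial_order_on_def preorder_on_def by blast
  then have "(\<xi>, \<xi>) \<in> r" using F(2) by (simp add: refl_onD)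
  then have ne: "\<eta> \<noteq> \<xi>" using e by auto
  have "total_on (Field r) r" using lin unfolding linear_order_on_def by blast
  then have "(\<xi>, \<eta>) \<in> r" using F ne e(3) unfolding total_on_def by blast
  then show ?thesis using e ne by blast
qed

lemma pigeon:
  assumes "\<not> countable Y" "countable I" "Y \<subseteq> (\<Union>i\<in>I. f i)"
  shows "\<exists>i\<in>I. \<not> countable (Y \<inter> f i)"
proof (rule ccontr)
  assume H: "\<not> ?thesis"
  have "countable (\<Union>i\<in>I. Y \<inter> f i)" 
  proof (rule countable_UN[OF assms(2)])
    fix i assume "i \<in> I" then show "countable (Y \<inter> f i)" using H by blast
  qed
  moreover have eq: "(\<Union>i\<in>I. Y \<inter> f i) = Y" using assms(3) by blast
  ultimately have "countable Y" by simp
  then show False using assms(1) by contradiction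
qed

lemma inj_fiber_countable:
  assumes "inj_on x A" shows "countable {\<xi>\<in>A. x \<xi> = w}"
proof -
  have "finite {\<xi>\<in>A. x \<xi> = w}"
  proof (cases "{\<xi>\<in>A. x \<xi> = w} = {}")
    case False
    then obtain a where a: "a \<in> A" "x a = w" by auto
    then have "{\<xi>\<in>A. x \<xi> = w} = {a}" using assms by (auto simp: inj_on_def)
    then show ?thesis by simp
  next
    case True then show ?thesis by (simp only: finite.emptyI)
  qed
  then show ?thesis by (rule countable_finite)
qed

lemma succ_upt: "(\<And>i. Q (s i) (s (Suc i))) \<Longrightarrow> successively Q (map s [0..<m])"
  by (auto simp: successively_conv_nth)

lemma len_concat_const: "(\<And>i. length (M (s i)) = d) \<Longrightarrow> length (concat (map M (map s [0..<m]))) = m * d"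
  by (induction m) auto

lemma unc_ex: "\<not> countable A \<Longrightarrow> \<exists>a. a \<in> A"
proof (rule ccontr)
  assume "\<not> countable A" "\<not> (\<exists>a. a \<in> A)"
  then have "A = {}" by blast
  then show False using \<open>\<not> countable A\<close> by simp
qed

lemma take_len: "take (length P) w = P \<Longrightarrow> length P \<le> length w"
  by (drule arg_cong[of _ _ length]) simp

lemma unc_sub: "A \<subseteq> B \<Longrightarrow> countable B \<Longrightarrow> \<not> countable A \<Longrightarrow> False"
  using countable_subset by blast



theorem theorem4p1:
  fixes K :: "'a set" and r :: "'b rel"
  assumes "Well_order r" and "\<not> countable (Field r)"
  shows "\<not> Hind (free_group K) r"
proof
  note wo = assms(1) and unc = assms(2)
  assume H: "Hind (free_group K) r"
  define A0 where "A0 = {w \<in> carrier (free_group K). even (floor_log (length w))}"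
  define A1 where "A1 = {w \<in> carrier (free_group K). odd (floor_log (length w))}"
  have part: "A0 \<union> A1 = carrier (free_group K) \<and> A0 \<inter> A1 = {}" unfolding A0_def A1_def by auto
  have ex: "\<exists>x. x \<in> Field r \<rightarrow> carrier (free_group K) \<and> inj_on x (Field r) \<and>
           (FP (free_group K) r x \<subseteq> A0 \<or> FP (free_group K) r x \<subseteq> A1)"
    using H[unfolded Hind_def, THEN spec[of _ A0], THEN spec[of _ A1], THEN mp, OF part] .
  then obtain x where xF: "x \<in> Field r \<rightarrow> carrier (free_group K)" and inj: "inj_on x (Field r)"
    and mono: "FP (free_group K) r x \<subseteq> A0 \<or> FP (free_group K) r x \<subseteq> A1"
    by blast
  have red: "reduced (x \<xi>)" if "\<xi> \<in> Field r" for \<xi>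
    using xF that by (auto simp: free_group_def Pi_iff)
  obtain D where D: "D \<subseteq> Field r" "\<not> countable D" "\<forall>\<xi>\<in>D. countable {\<eta>. (\<eta>, \<xi>) \<in> r}"
    using wo_D[OF wo unc] by blast
  obtain n where Y0unc: "\<not> countable (D \<inter> {\<xi>. length (x \<xi>) = n})"
    using pigeon[OF D(2), of UNIV "\<lambda>n. {\<xi>. length (x \<xi>) = n}"] by auto
  define Y0 where "Y0 = D \<inter> {\<xi>. length (x \<xi>) = n}"
  have Y0unc': "\<not> countable Y0" using Y0unc Y0_def by simp
  define good where "good P \<longleftrightarrow> \<not> countable {\<xi>\<in>Y0. take (length P) (x \<xi>) = P}" for P :: "('a \<times> bool) list"
  define Ls where "Ls = {l. \<exists>P. length P = l \<and> good P}"
  have Ls_sub: "Ls \<subseteq> {..n}"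
  proof
    fix l assume "l \<in> Ls"
    then obtain P where P: "length P = l" "good P" unfolding Ls_def by auto
    then obtain \<xi> where "\<xi> \<in> {\<xi>\<in>Y0. take (length P) (x \<xi>) = P}" unfolding good_def using unc_ex by blast
    then have "\<xi>\<in>Y0" "take (length P) (x \<xi>) = P" by simp_all
    have "length P = min (length (x \<xi>)) (length P)" using arg_cong[OF \<open>take (length P) (x \<xi>) = P\<close>, of length] by simp
    then have "length P \<le> length (x \<xi>)" by simp
    moreover have "length (x \<xi>) = n" using \<open>\<xi>\<in>Y0\<close> unfolding Y0_def by simp
    ultimately show "l \<in> {..n}" using P(1) by simp
  qed
  have "good []" unfolding good_def using Y0unc' by simp
  then have "0 \<in> Ls" unfolding Ls_def by auto
  have finLs: "finite Ls" by (rule finite_subset[OF Ls_sub]) simp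
  define l0 where "l0 = Max Ls"
  have "Ls \<noteq> {}" using \<open>0 \<in> Ls\<close> by blast
  then have "l0 \<in> Ls" unfolding l0_def using finLs Max_in by blast
  then obtain P where P: "length P = l0" "good P" unfolding Ls_def by auto
  have maxP: "\<not> good (P @ [a])" for a
  proof
    assume "good (P @ [a])"
    then have "Suc l0 \<in> Ls" unfolding Ls_def using P(1) by (intro CollectI exI[of _ "P @ [a]"]) simp
    then show False using Max_ge[OF finLs] l0_def by fastforce
  qed
  define Y1 where "Y1 = {\<xi>\<in>Y0. take (length P) (x \<xi>) = P}"
  have Y1unc: "\<not> countable Y1" using P(2) unfolding good_def Y1_def by simp
  have Y1D: "Y1 \<subseteq> D" unfolding Y1_def Y0_def by auto
  have lenY1: "length (x \<xi>) = n" if "\<xi> \<in> Y1" for \<xi> using that unfolding Y1_def Y0_def by auto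
  have preY1: "take (length P) (x \<xi>) = P" if "\<xi> \<in> Y1" for \<xi> using that unfolding Y1_def by auto
  have Pn: "length P < n"
  proof -
    obtain \<xi> where "\<xi> \<in> Y1" using unc_ex[OF Y1unc] by blast
    then have "length P \<le> n" using lenY1[OF \<open>\<xi> \<in> Y1\<close>] take_len[OF preY1[OF \<open>\<xi> \<in> Y1\<close>]] by simp
    moreover have "length P \<noteq> n"
    proof
      assume e: "length P = n"
      have "Y1 \<subseteq> {\<xi>\<in>Field r. x \<xi> = P}"
      proof
        fix \<xi> assume h: "\<xi> \<in> Y1"
        then have "x \<xi> = P" using preY1[OF h] lenY1[OF h] e by simp
        then show "\<xi> \<in> {\<xi>\<in>Field r. x \<xi> = P}" using h Y1D D(1) by blast
      qed
      then show False using unc_sub[OF _ inj_fiber_countable[OF inj] Y1unc] by blast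
    qed
    ultimately show ?thesis by simp
  qed
  have spread: "countable {\<xi>\<in>Y1. x \<xi> ! length P = a}" for a
  proof -
    have "{\<xi>\<in>Y1. x \<xi> ! length P = a} \<subseteq> {\<xi>\<in>Y0. take (length (P @ [a])) (x \<xi>) = P @ [a]}"
    proof
      fix \<xi> assume h: "\<xi> \<in> {\<xi>\<in>Y1. x \<xi> ! length P = a}"
      then have "\<xi> \<in> Y1" "x \<xi> ! length P = a" by auto
      then have "take (Suc (length P)) (x \<xi>) = P @ [a]"
        using take_Suc_conv_app_nth[of "length P" "x \<xi>"] lenY1 preY1 Pn by simp
      then show "\<xi> \<in> {\<xi>\<in>Y0. take (length (P @ [a])) (x \<xi>) = P @ [a]}" using \<open>\<xi> \<in> Y1\<close> Y1_def by simp
    qed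
    moreover have "countable {\<xi>\<in>Y0. take (length (P @ [a])) (x \<xi>) = P @ [a]}" using maxP[of a] unfolding good_def by blast
    ultimately show ?thesis by (rule countable_subset)
  qed
  define mt where "mt \<xi> j \<longleftrightarrow> drop (n - j) (x \<xi>) = winv (take j P)" for \<xi> j
  define cf where "cf \<xi> = Max {j. j \<le> length P \<and> mt \<xi> j}" for \<xi>
  have cf: "cf \<xi> \<le> length P \<and> mt \<xi> (cf \<xi>) \<and> (\<forall>j. j \<le> length P \<longrightarrow> mt \<xi> j \<longrightarrow> j \<le> cf \<xi>)" if "\<xi> \<in> Y1" for \<xi>
  proof -
    have fin: "finite {j. j \<le> length P \<and> mt \<xi> j}" by simp
    have "0 \<in> {j. j \<le> length P \<and> mt \<xi> j}" using lenY1[OF that] by (simp add: mt_def)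
    then have "cf \<xi> \<in> {j. j \<le> length P \<and> mt \<xi> j}" unfolding cf_def using fin Max_in by blast
    moreover have "\<forall>j. j \<le> length P \<longrightarrow> mt \<xi> j \<longrightarrow> j \<le> cf \<xi>" unfolding cf_def using fin Max_ge by blast
    ultimately show ?thesis by blast
  qed
  obtain c0 where c0: "c0 \<in> {..length P}" "\<not> countable (Y1 \<inter> {\<xi>. cf \<xi> = c0})"
    using pigeon[OF Y1unc, of "{..length P}" "\<lambda>c. {\<xi>. cf \<xi> = c}"] cf by auto
  define Y2 where "Y2 = Y1 \<inter> {\<xi>. cf \<xi> = c0}"
  have Y2unc: "\<not> countable Y2" using c0 Y2_def by simp
  have Y2Y1: "Y2 \<subseteq> Y1" unfolding Y2_def by auto
  have c0P: "c0 \<le> length P" using c0 by simp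
  define P1 where "P1 = take c0 P"
  have lenP1: "length P1 = c0" using c0P P1_def by simp
  have sufY2: "drop (n - c0) (x \<xi>) = winv P1" if "\<xi> \<in> Y2" for \<xi>
    using cf[of \<xi>] that unfolding Y2_def mt_def P1_def by auto
  have preY2: "take c0 (x \<xi>) = P1" if "\<xi> \<in> Y2" for \<xi>
  proof -
    have "take c0 (x \<xi>) = take c0 (take (length P) (x \<xi>))" using c0P by (simp add: min_def)
    also have "take (length P) (x \<xi>) = P" using preY1 that Y2Y1 by blast
    finally show ?thesis unfolding P1_def .
  qed
  have n2: "2 * c0 < n"
  proof (rule ccontr)
    assume "\<not> 2 * c0 < n"
    then have le: "n - c0 \<le> length P" using c0P by linarith
    define cst where "cst = winv P1 ! (length P - (n - c0))"
    have "Y2 \<subseteq> {\<xi>\<in>Y1. x \<xi> ! length P = cst}"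
    proof
      fix \<xi> assume h: "\<xi> \<in> Y2"
      have "x \<xi> ! length P = drop (n - c0) (x \<xi>) ! (length P - (n - c0))"
        using le lenY1[of \<xi>] h Y2Y1 Pn by (subst nth_drop) auto
      then show "\<xi> \<in> {\<xi>\<in>Y1. x \<xi> ! length P = cst}" using sufY2[OF h] h Y2Y1 cst_def by auto
    qed
    then show False using unc_sub[OF _ spread[of cst] Y2unc] by blast
  qed
  define d where "d = n - 2 * c0"
  have d1: "d \<ge> 1" using n2 d_def by simp
  define M where "M \<xi> = drop c0 (take (n - c0) (x \<xi>))" for \<xi>
  have decomp: "x \<xi> = P1 @ M \<xi> @ winv P1" if h: "\<xi> \<in> Y2" for \<xi>
  proof -
    have "x \<xi> = take (n - c0) (x \<xi>) @ drop (n - c0) (x \<xi>)" by simp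
    also have "take (n - c0) (x \<xi>) = take c0 (take (n - c0) (x \<xi>)) @ M \<xi>" unfolding M_def by (rule append_take_drop_id[symmetric])
    also have "take c0 (take (n - c0) (x \<xi>)) = P1" using preY2[OF h] n2 by (simp add: min_absorb1)
    finally show ?thesis using sufY2[OF h] by simp
  qed
  have lenM: "length (M \<xi>) = d" if "\<xi> \<in> Y2" for \<xi>
    using lenY1[of \<xi>] that Y2Y1 n2 unfolding M_def d_def by auto
  have Mne: "M \<xi> \<noteq> []" if "\<xi> \<in> Y2" for \<xi> using lenM[OF that] d1 by auto
  have hdM: "hd (M \<xi>) = x \<xi> ! c0" if h: "\<xi> \<in> Y2" for \<xi>
  proof -
    have "x \<xi> ! c0 = (P1 @ M \<xi> @ winv P1) ! c0" using decomp[OF h] by metis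
    also have "\<dots> = (M \<xi> @ winv P1) ! 0" using lenP1 by (simp add: nth_append)
    also have "\<dots> = hd (M \<xi>)" using Mne[OF h] by (simp add: nth_append hd_conv_nth)
    finally show ?thesis by simp
  qed
  have lastM: "last (M \<xi>) = x \<xi> ! (n - c0 - 1)" if h: "\<xi> \<in> Y2" for \<xi>
  proof -
    have e: "n - c0 - 1 = c0 + (d - 1)" using n2 d_def by simp
    have "x \<xi> ! (c0 + (d - 1)) = (P1 @ M \<xi> @ winv P1) ! (c0 + (d - 1))" using decomp[OF h] by metis
    also have "\<dots> = (M \<xi> @ winv P1) ! (d - 1)" using lenP1 by (simp add: nth_append)
    also have "\<dots> = M \<xi> ! (d - 1)" using lenM[OF h] d1 by (simp add: nth_append)
    also have "\<dots> = last (M \<xi>)" using lenM[OF h] Mne[OF h] by (simp add: last_conv_nth)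
    finally show ?thesis using e by simp
  qed
  have bad: "countable {\<eta>\<in>Y2. hd (M \<eta>) = linv (last (M \<xi>))}" if h: "\<xi> \<in> Y2" for \<xi>
  proof (cases "c0 < length P")
    case True
    have "{\<eta>\<in>Y2. hd (M \<eta>) = linv (last (M \<xi>))} = {}"
    proof (rule ccontr)
      assume "{\<eta>\<in>Y2. hd (M \<eta>) = linv (last (M \<xi>))} \<noteq> {}"
      then obtain \<eta> where e: "\<eta> \<in> Y2" "hd (M \<eta>) = linv (last (M \<xi>))" by blast
      have "x \<eta> ! c0 = P ! c0" using preY1[of \<eta>] e(1) Y2Y1 True by (metis in_mono nth_take)
      then have "P ! c0 = linv (x \<xi> ! (n - c0 - 1))" using e hdM[OF e(1)] lastM[OF h] by simp
      then have l: "x \<xi> ! (n - Suc c0) = linv (P ! c0)" by simp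
      have "drop (n - Suc c0) (x \<xi>) = x \<xi> ! (n - Suc c0) # drop (Suc (n - Suc c0)) (x \<xi>)"
        using lenY1[of \<xi>] h Y2Y1 n2 by (intro Cons_nth_drop_Suc[symmetric]) auto
      also have "Suc (n - Suc c0) = n - c0" using n2 by simp
      also have "drop (n - c0) (x \<xi>) = winv P1" using sufY2[OF h] .
      finally have "drop (n - Suc c0) (x \<xi>) = winv (take (Suc c0) P)"
        using l True unfolding P1_def by (simp add: take_Suc_conv_app_nth)
      then have "mt \<xi> (Suc c0)" unfolding mt_def .
      then have "Suc c0 \<le> cf \<xi>" using cf[of \<xi>] h Y2Y1 True by auto
      then show False using h Y2_def by simp
    qed
    then show ?thesis by (simp only: countable_empty)
  next
    case False
    then have "c0 = length P" using c0P by simp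
    then have "{\<eta>\<in>Y2. hd (M \<eta>) = linv (last (M \<xi>))} \<subseteq> {\<eta>\<in>Y1. x \<eta> ! length P = linv (last (M \<xi>))}"
      using hdM Y2Y1 by auto
    then show ?thesis using spread by (rule countable_subset)
  qed
  define nxt where "nxt \<xi> = (SOME \<eta>. \<eta> \<in> Y2 \<and> (\<xi>, \<eta>) \<in> r \<and> \<eta> \<noteq> \<xi> \<and> hd (M \<eta>) \<noteq> linv (last (M \<xi>)))" for \<xi>
  have Y2D: "Y2 \<subseteq> D" using Y2Y1 Y1D by auto
  have nxt: "nxt \<xi> \<in> Y2 \<and> (\<xi>, nxt \<xi>) \<in> r \<and> nxt \<xi> \<noteq> \<xi> \<and> hd (M (nxt \<xi>)) \<noteq> linv (last (M \<xi>))"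
    if h: "\<xi> \<in> Y2" for \<xi>
  proof -
    obtain \<eta> where "\<eta> \<in> Y2" "\<eta> \<notin> {\<eta>\<in>Y2. hd (M \<eta>) = linv (last (M \<xi>))}" "(\<xi>, \<eta>) \<in> r" "\<eta> \<noteq> \<xi>"
      using wo_pick[OF wo D(1) D(3) Y2D Y2unc _ bad[OF h]] h Y2D by blast
    then have "\<exists>\<eta>. \<eta> \<in> Y2 \<and> (\<xi>, \<eta>) \<in> r \<and> \<eta> \<noteq> \<xi> \<and> hd (M \<eta>) \<noteq> linv (last (M \<xi>))" by blast
    then show ?thesis unfolding nxt_def by (rule someI_ex)
  qed
  obtain \<xi>0 where \<xi>0: "\<xi>0 \<in> Y2" using unc_ex[OF Y2unc] by blast
  define s where "s k = (nxt ^^ k) \<xi>0" for k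
  have sY: "s k \<in> Y2" for k by (induction k) (use \<xi>0 nxt in \<open>auto simp: s_def\<close>)
  have sstep: "(s k, s (Suc k)) \<in> r \<and> s k \<noteq> s (Suc k) \<and> hd (M (s (Suc k))) \<noteq> linv (last (M (s k)))" for k
    using nxt[OF sY[of k]] by (auto simp: s_def)
  have Y2F: "Y2 \<subseteq> Field r" using Y2D D(1) by auto
  have tr: "transp (\<lambda>a b. (a, b) \<in> r \<and> a \<noteq> b)"
  proof (rule transpI)
    have lin: "linear_order_on (Field r) r" using wo by (simp add: well_order_on_def)
    then have t: "trans r" and an: "antisym r"
      unfolding linear_order_on_def partial_order_on_def preorder_on_def by auto
    fix a b c assume "(a, b) \<in> r \<and> a \<noteq> b" "(b, c) \<in> r \<and> b \<noteq> c"
    then show "(a, c) \<in> r \<and> a \<noteq> c" using t an unfolding trans_def antisym_def by blast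
  qed
  have mult_eq: "(\<lambda>a b. a \<otimes>\<^bsub>free_group K\<^esub> b) = (\<lambda>a b. foldr cons_red a b)"
    by (simp add: free_group_def)
  have val: "foldr (\<lambda>a b. a \<otimes>\<^bsub>free_group K\<^esub> b) (map x (butlast (map s [0..<m]))) (x (last (map s [0..<m])))
      \<in> FP (free_group K) r x \<and>
     length (foldr (\<lambda>a b. a \<otimes>\<^bsub>free_group K\<^esub> b) (map x (butlast (map s [0..<m]))) (x (last (map s [0..<m]))))
      = 2 * c0 + m * d" if m1: "m \<ge> 1" for m
  proof
    have ne: "map s [0..<m] \<noteq> []" using m1 by simp
    have st: "set (map s [0..<m]) \<subseteq> Y2" using sY by auto
    have "sorted_wrt (\<lambda>a b. (a, b) \<in> r \<and> a \<noteq> b) (map s [0..<m])"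
      unfolding successively_conv_sorted_wrt[OF tr, symmetric]
      by (rule succ_upt) (use sstep in auto)
    then show "foldr (\<lambda>a b. a \<otimes>\<^bsub>free_group K\<^esub> b) (map x (butlast (map s [0..<m]))) (x (last (map s [0..<m])))
      \<in> FP (free_group K) r x"
      unfolding FP_def using ne st Y2F by blast
    have sc: "successively (\<lambda>a b. hd (M b) \<noteq> linv (last (M a))) (map s [0..<m])"
      by (rule succ_upt) (use sstep in auto)
    have "foldr (\<lambda>a b. foldr cons_red a b) (map x (butlast (map s [0..<m]))) (x (last (map s [0..<m])))
        = P1 @ concat (map M (map s [0..<m])) @ winv P1"
      using chain_value[of Y2 x P1 M, OF _ st ne sc] decomp Mne Y2F red by blast
    moreover have "length (concat (map M (map s [0..<m]))) = m * d"
      by (rule len_concat_const) (use lenM sY in auto)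
    ultimately show "length (foldr (\<lambda>a b. a \<otimes>\<^bsub>free_group K\<^esub> b) (map x (butlast (map s [0..<m]))) (x (last (map s [0..<m]))))
      = 2 * c0 + m * d" unfolding mult_eq using lenP1 by simp
  qed
  obtain k1 where k1: "k1 \<ge> 1" "even (floor_log (2 * c0 + k1 * d))" using ap_colors(1)[OF d1] by blast
  obtain k2 where k2: "k2 \<ge> 1" "odd (floor_log (2 * c0 + k2 * d))" using ap_colors(2)[OF d1] by blast
  show False
    using mono val[OF k1(1)] val[OF k2(1)] k1(2) k2(2) unfolding A0_def A1_def by auto
qed


end
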